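(* Let $\mathrm{Cl}_{p,q}$ be a non-degenerate real Clifford algebra with generators $e_1,\dots,e_n$ and extended basis $\mathbf{B}$ as below, and write $e_Le_{L'}=m_{\lambda\lambda'}e_{L\triangle L'}$ for blades $e_L,e_{L'}\in\mathbf{B}$ with ordinals $\lambda,\lambda'$. Let $S,T$ be disjoint multi-indices with $S\prec T$ (every index in $S$ smaller than every index in $T$). If $e_L,e_{L'}\in\mathbf{B}$ satisfy $e_Le_{L'}=m_{\lambda\lambda'}e_{S\triangle T}$, then there is a blade $e_M\in\mathbf{B}$ (ordinal $\mu$) with $e_Le_M=m_{\lambda\mu}e_S$ and $e_Me_{L'}=m_{\mu\lambda'}e_T$, and \[ m_{\lambda\lambda'}=m_{\lambda\mu}\,\sigma_\mu\,m_{\mu\lambda'} . \]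
   Context: Generators satisfy $e_ie_j=-e_je_i$ ($i\ne j$), $e_i^2=\sigma_i\in\{\pm1\}$. For $S=(s_1<\dots<s_m)$, $e_S=e_{s_1}\cdots e_{s_m}$, $e_\emptyset=1$. $\mathbf{B}$ lists all $2^n$ blades in a fixed total order extending $e_i\prec e_j$ for $i<j$; blades are indexed by their ordinal. Products of blades satisfy $e_Me_N=m_{MN}e_{M\triangle N}$ with $m_{MN}\in\{\pm1\}$, where $\triangle$ is symmetric difference; $\sigma_\mu=\langle e_Me_M\rangle_0\in\{\pm1\}$ for the blade $e_M$ of ordinal $\mu$. *)

theory Defs
  imports Main
begin

text \<open>Blades of Cl_{p,q} with generators e_1..e_n are indexed by their multi-index
  M, a subset of {1..n}; the ordinal labelling of the fixed order on B is immaterial,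
  so blades are identified with their index sets.  The signature is given by
  sig :: nat => int with sig i in {1,-1} (non-degenerate).\<close>

definition symdiff :: "nat set \<Rightarrow> nat set \<Rightarrow> nat set" where
  "symdiff A B = (A - B) \<union> (B - A)"

text \<open>Sign m_{MN} in e_M e_N = m_{MN} e_{M symdiff N}: bringing the word
  e_{m_1}...e_{m_k} e_{n_1}...e_{n_l} into increasing order costs one factor -1 per
  pair (i in M, j in N) with j < i (anticommutation), and each repeated generator
  contracts to e_i^2 = sig i.\<close>
definition blade_sign :: "(nat \<Rightarrow> int) \<Rightarrow> nat set \<Rightarrow> nat set \<Rightarrow> int" where
  "blade_sign sig M N =
     (-1) ^ card {(i, j). i \<in> M \<and> j \<in> N \<and> j < i} * (\<Prod>i\<in>M \<inter> N. sig i)"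

definition blade_square :: "(nat \<Rightarrow> int) \<Rightarrow> nat set \<Rightarrow> int" where
  "blade_square sig M = blade_sign sig M M"

end

theory Submission
  imports Defs
begin

lemma prod_symdiff:
  fixes f :: "'a \<Rightarrow> int"
  assumes "finite X" "finite Y" "\<forall>x\<in>X\<inter>Y. f x * f x = 1"
  shows "prod f ((X - Y) \<union> (Y - X)) = prod f X * prod f Y"
proof -
  have X: "prod f X = prod f (X - Y) * prod f (X \<inter> Y)"
  proof -
    have "X = (X - Y) \<union> (X \<inter> Y)" by blast
    then have "prod f X = prod f ((X - Y) \<union> (X \<inter> Y))" by simp
    also have "\<dots> = prod f (X - Y) * prod f (X \<inter> Y)"
      using assms by (intro prod.union_disjoint) auto
    finally show ?thesis .
  qed
  have Y: "prod f Y = prod f (Y - X) * prod f (X \<inter> Y)"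
  proof -
    have "Y = (Y - X) \<union> (X \<inter> Y)" by blast
    then have "prod f Y = prod f ((Y - X) \<union> (X \<inter> Y))" by simp
    also have "\<dots> = prod f (Y - X) * prod f (X \<inter> Y)"
      using assms by (intro prod.union_disjoint) auto
    finally show ?thesis .
  qed
  have sq: "prod f (X \<inter> Y) * prod f (X \<inter> Y) = 1"
    using assms(3) by (simp add: prod.distrib[symmetric])
  have S: "prod f ((X - Y) \<union> (Y - X)) = prod f (X - Y) * prod f (Y - X)"
    using assms by (intro prod.union_disjoint) auto
  have "prod f X * prod f Y = prod f (X - Y) * prod f (Y - X) * (prod f (X \<inter> Y) * prod f (X \<inter> Y))"
    unfolding X Y by (simp add: ac_simps)
  then show ?thesis using sq S by simp
qed

definition pairs :: "nat set \<Rightarrow> nat set \<Rightarrow> (nat \<times> nat) set" where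
  "pairs A B = {(i, j). i \<in> A \<and> j \<in> B \<and> j < i}"

lemma pairs_fin: "finite A \<Longrightarrow> finite B \<Longrightarrow> finite (pairs A B)"
  by (rule finite_subset[of _ "A \<times> B"]) (auto simp: pairs_def)

lemma bs_alt: "blade_sign sig A B = prod (\<lambda>_. -1) (pairs A B) * prod sig (A \<inter> B)"
  unfolding blade_sign_def pairs_def by simp

lemma pairs_l: "pairs (symdiff A B) C = (pairs A C - pairs B C) \<union> (pairs B C - pairs A C)"
  unfolding pairs_def symdiff_def by auto
lemma pairs_r: "pairs A (symdiff B C) = (pairs A B - pairs A C) \<union> (pairs A C - pairs A B)"
  unfolding pairs_def symdiff_def by auto

lemma cocycle:
  assumes sg: "\<forall>i\<in>{1..n}. sig i = 1 \<or> sig i = -1"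
    and A: "A \<subseteq> {1..n}" and B: "B \<subseteq> {1..n}" and C: "C \<subseteq> {1..n}"
  shows "blade_sign sig A B * blade_sign sig (symdiff A B) C =
         blade_sign sig A (symdiff B C) * blade_sign sig B C"
proof -
  have fA: "finite A" using A finite_subset by blast
  have fB: "finite B" using B finite_subset by blast
  have fC: "finite C" using C finite_subset by blast
  have sq: "\<forall>x\<in>X. sig x * sig x = 1" if "X \<subseteq> {1..n}" for X
    using sg that by force
  let ?p = "\<lambda>X. prod (\<lambda>_. -1::int) X"
  have e1: "?p (pairs (symdiff A B) C) = ?p (pairs A C) * ?p (pairs B C)"
    unfolding pairs_l by (rule prod_symdiff) (auto intro: pairs_fin fA fB fC)
  have e2: "?p (pairs A (symdiff B C)) = ?p (pairs A B) * ?p (pairs A C)"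
    unfolding pairs_r by (rule prod_symdiff) (auto intro: pairs_fin fA fB fC)
  have i1: "symdiff A B \<inter> C = symdiff (A \<inter> C) (B \<inter> C)" unfolding symdiff_def by auto
  have i2: "A \<inter> symdiff B C = symdiff (A \<inter> B) (A \<inter> C)" unfolding symdiff_def by auto
  have e3: "prod sig (symdiff A B \<inter> C) = prod sig (A \<inter> C) * prod sig (B \<inter> C)"
    unfolding i1 unfolding symdiff_def by (rule prod_symdiff) (use fA fB fC sq[of "A \<inter> C \<inter> (B \<inter> C)"] A in auto)
  have e4: "prod sig (A \<inter> symdiff B C) = prod sig (A \<inter> B) * prod sig (A \<inter> C)"
    unfolding i2 unfolding symdiff_def by (rule prod_symdiff) (use fA fB fC sq[of "A \<inter> B \<inter> (A \<inter> C)"] A in auto)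
  show ?thesis unfolding bs_alt e1 e2 e3 e4 by (simp add: ac_simps)
qed

lemma sign_sq:
  assumes sg: "\<forall>i\<in>{1..n}. sig i = 1 \<or> sig i = -1" and A: "A \<subseteq> {1..n}"
  shows "blade_sign sig A B * blade_sign sig A B = 1"
proof -
  have "prod sig (A \<inter> B) * prod sig (A \<inter> B) = 1"
    unfolding prod.distrib[symmetric] using sg A by (intro prod.neutral) force
  moreover have "((-1::int) ^ k) * (-1) ^ k = 1" for k
    by (simp add: power_add[symmetric])
  ultimately show ?thesis unfolding blade_sign_def
    by (simp add: ac_simps)
qed

theorem lemma2:
  fixes n :: nat and sig :: "nat \<Rightarrow> int" and S T L L' :: "nat set"
  assumes nondeg: "\<forall>i\<in>{1..n}. sig i = 1 \<or> sig i = -1"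
    and S: "S \<subseteq> {1..n}" and T: "T \<subseteq> {1..n}"
    and L: "L \<subseteq> {1..n}" and L': "L' \<subseteq> {1..n}"
    and disj: "S \<inter> T = {}"
    and prec: "\<forall>s\<in>S. \<forall>t\<in>T. s < t"
    and prod: "symdiff L L' = symdiff S T"
  shows "\<exists>M. M \<subseteq> {1..n} \<and> symdiff L M = S \<and> symdiff M L' = T \<and>
           blade_sign sig L L' = blade_sign sig L M * blade_square sig M * blade_sign sig M L'"
proof (intro exI conjI)
  define M where "M = symdiff L S"
  show M: "M \<subseteq> {1..n}" using L S unfolding M_def symdiff_def by auto
  show hLM: "symdiff L M = S" unfolding M_def symdiff_def by auto
  have "\<And>x. x \<in> L' \<longleftrightarrow> (x \<in> L) \<noteq> (x \<in> S \<union> T)"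
    using prod disj unfolding symdiff_def set_eq_iff by blast
  then show hMT: "symdiff M L' = T" using disj unfolding M_def symdiff_def by auto
  have hML: "symdiff M T = L'"
    using \<open>\<And>x. x \<in> L' \<longleftrightarrow> (x \<in> L) \<noteq> (x \<in> S \<union> T)\<close> disj
    unfolding M_def symdiff_def by auto
  have ST: "blade_sign sig S T = 1"
  proof -
    have "pairs S T = {}" using prec unfolding pairs_def by clarsimp (meson less_asym)
    then show ?thesis unfolding bs_alt using disj by simp
  qed
  have E: "blade_sign sig {} X = 1" for X unfolding bs_alt pairs_def by simp
  have c1: "blade_sign sig L M * blade_sign sig S T = blade_sign sig L L' * blade_sign sig M T"
    using cocycle[OF nondeg L M T] hLM hML by simp
  have hMM: "symdiff M M = {}" unfolding symdiff_def by auto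
  have c2: "blade_square sig M = blade_sign sig M T * blade_sign sig M L'"
    using cocycle[OF nondeg M M L'] hMM hMT E unfolding blade_square_def by simp
  have s1: "blade_sign sig M T * blade_sign sig M T = 1" by (rule sign_sq[OF nondeg M])
  have s2: "blade_sign sig M L' * blade_sign sig M L' = 1" by (rule sign_sq[OF nondeg M])
  have "blade_sign sig L M * blade_square sig M * blade_sign sig M L'
      = blade_sign sig L L' * (blade_sign sig M T * blade_sign sig M T)
          * (blade_sign sig M L' * blade_sign sig M L')"
    using c1 c2 ST by (simp add: ac_simps)
  then show "blade_sign sig L L' = blade_sign sig L M * blade_square sig M * blade_sign sig M L'"
    using s1 s2 by simp
qed

end
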